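(* Let $\Lambda$ be a row-finite $k$-graph with no sources, and let $\{t_\lambda\}_{\lambda\in\Lambda}$ be an irreducible representation of $C^*(\Lambda)$ with associated projection valued measure $P$. Suppose $\omega\in\Lambda^\infty$ is an atom, i.e. $P(\{\omega\})\neq0$. Then $\{t_\lambda\}_{\lambda\in\Lambda}$ is purely atomic and $P$ is supported on $\mathrm{Orbit}(\omega)$.
   Context: A $k$-graph ($k\ge1$) is a countable small category $\Lambda$ with a functor $d:\Lambda\to\mathbb N^k$ satisfying unique factorization: if $d(\lambda)=m+n$ there are unique $\mu,\nu$ with $\lambda=\mu\nu$, $d(\mu)=m$, $d(\nu)=n$. $\Lambda^0$ = vertices, $r,s$ = range, source, $v\Lambda^n=\{\lambda:d(\lambda)=n,r(\lambda)=v\}$; row-finite: each $v\Lambda^n$ finite; no sources: each $v\Lambda^n$ nonempty. Infinite paths are degree-preserving functors $x:\Omega_k\to\Lambda$, where $\Omega_k$ has objects $\mathbb N^k$, morphisms $(p,q)$, $p\le q$, $d(p,q)=q-p$; $\Lambda^\infty$ is their set; $\sigma^m(x)(p,q)=x(p+m,q+m)$. $\mathrm{Orbit}(\omega)=\{\gamma:\sigma^m(\gamma)=\sigma^\ell(\omega)\text{ for some }m,\ell\in\mathbb N^k\}$. Cylinder sets $Z(\lambda)=\{x:x(0,d(\lambda))=\lambda\}$ generate the Borel $\sigma$-algebra. A representation of $C^*(\Lambda)$ is a family of partial isometries $\{t_\lambda\}$ on a Hilbert space satisfying (CK1) $\{t_v\}$ mutually orthogonal projections, (CK2) $t_\lambda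 t_\eta=t_{\lambda\eta}$ when $s(\lambda)=r(\eta)$, (CK3) $t_\lambda^*t_\lambda=t_{s(\lambda)}$, (CK4) $t_v=\sum_{\lambda\in v\Lambda^n}t_\lambda t_\lambda^*$. Its projection valued measure $P$ on Borel sets of $\Lambda^\infty$ satisfies $P(Z(\lambda))=t_\lambda t_\lambda^*$. Purely atomic: there is a Borel $\Omega$ with $P(\Lambda^\infty\setminus\Omega)=0$, $P(\{\omega\})\ne0$ for all $\omega\in\Omega$, and $\sum_{\omega\in\Omega}P(\{\omega\})=\mathrm{Id}$ strongly. "Supported on $A$" means $P(\Lambda^\infty\setminus A)=0$. *)

theory Defs
  imports "HOL-Analysis.Analysis" "HOL-Library.Function_Algebras"
begin

text \<open>A complex Hilbert space: a complete real inner product space carrying a complex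
  scalar multiplication and a complex inner product (linear in the second variable,
  conjugate symmetric) whose real part is the real inner product.\<close>

class chilbert = real_inner + complete_space +
  fixes scaleC :: "complex \<Rightarrow> 'a \<Rightarrow> 'a"
    and cinner :: "'a \<Rightarrow> 'a \<Rightarrow> complex"
  assumes scaleC_add_right: "scaleC c (x + y) = scaleC c x + scaleC c y"
    and scaleC_add_left: "scaleC (b + c) x = scaleC b x + scaleC c x"
    and scaleC_scaleC: "scaleC b (scaleC c x) = scaleC (b * c) x"
    and scaleC_of_real: "scaleC (complex_of_real r) x = r *\<^sub>R x"
    and cinner_conj: "cinner x y = cnj (cinner y x)"
    and cinner_add_right: "cinner x (y + z) = cinner x y + cinner x z"
    and cinner_scaleC_right: "cinner x (scaleC c y) = c * cinner x y"
    and Re_cinner: "Re (cinner x y) = inner x y"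

definition bclin :: "('h::chilbert \<Rightarrow> 'h) \<Rightarrow> bool" where
  "bclin T \<longleftrightarrow> bounded_linear T \<and> (\<forall>c x. T (scaleC c x) = scaleC c (T x))"

definition cadj :: "('h::chilbert \<Rightarrow> 'h) \<Rightarrow> ('h \<Rightarrow> 'h)" where
  "cadj T = (THE S. \<forall>x y. cinner (T x) y = cinner x (S y))"

definition is_projection :: "('h::chilbert \<Rightarrow> 'h) \<Rightarrow> bool" where
  "is_projection P \<longleftrightarrow> bclin P \<and> P \<circ> P = P \<and> cadj P = P"

definition closed_csubspace :: "'h::chilbert set \<Rightarrow> bool" where
  "closed_csubspace M \<longleftrightarrow> 0 \<in> M \<and> (\<forall>x\<in>M. \<forall>y\<in>M. x + y \<in> M)
      \<and> (\<forall>c. \<forall>x\<in>M. scaleC c x \<in> M) \<and> closed M"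

text \<open>Degrees live in \<open>\<nat>\<^sup>k\<close>, encoded as functions \<open>nat \<Rightarrow> nat\<close> vanishing from index k on;
  addition, subtraction and order are pointwise.\<close>

definition Nk :: "nat \<Rightarrow> (nat \<Rightarrow> nat) set" where
  "Nk k = {n. \<forall>i\<ge>k. n i = 0}"

text \<open>A small category whose objects are identified with their identity morphisms:
  \<open>mors\<close> is the set of morphisms, \<open>rng\<close>/\<open>src\<close> give range/source (identity morphisms),
  \<open>cmp \<lambda> \<mu>\<close> is the composite \<open>\<lambda>\<mu>\<close> (defined when \<open>src \<lambda> = rng \<mu>\<close>), \<open>deg\<close> is the degree functor.\<close>

record 'a kgraph =
  mors :: "'a set"
  rng :: "'a \<Rightarrow> 'a"
  src :: "'a \<Rightarrow> 'a"
  cmp :: "'a \<Rightarrow> 'a \<Rightarrow> 'a"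
  deg :: "'a \<Rightarrow> nat \<Rightarrow> nat"

definition vertices :: "'a kgraph \<Rightarrow> 'a set" where
  "vertices G = {v \<in> mors G. rng G v = v}"

definition is_kgraph :: "nat \<Rightarrow> 'a kgraph \<Rightarrow> bool" where
  "is_kgraph k G \<longleftrightarrow> k \<ge> 1 \<and> countable (mors G) \<and>
     (\<forall>l\<in>mors G. rng G l \<in> mors G \<and> src G l \<in> mors G \<and>
        rng G (rng G l) = rng G l \<and> src G (rng G l) = rng G l \<and>
        rng G (src G l) = src G l \<and> src G (src G l) = src G l \<and>
        cmp G (rng G l) l = l \<and> cmp G l (src G l) = l \<and> deg G l \<in> Nk k) \<and>
     (\<forall>l\<in>mors G. \<forall>m\<in>mors G. src G l = rng G m \<longrightarrow>
        cmp G l m \<in> mors G \<and> rng G (cmp G l m) = rng G l \<and> src G (cmp G l m) = src G m \<and>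
        deg G (cmp G l m) = deg G l + deg G m) \<and>
     (\<forall>l\<in>mors G. \<forall>m\<in>mors G. \<forall>n\<in>mors G. src G l = rng G m \<longrightarrow> src G m = rng G n \<longrightarrow>
        cmp G (cmp G l m) n = cmp G l (cmp G m n)) \<and>
     (\<forall>l\<in>mors G. \<forall>m\<in>Nk k. \<forall>n\<in>Nk k. deg G l = m + n \<longrightarrow>
        (\<exists>!p. fst p \<in> mors G \<and> snd p \<in> mors G \<and> src G (fst p) = rng G (snd p) \<and>
              cmp G (fst p) (snd p) = l \<and> deg G (fst p) = m \<and> deg G (snd p) = n))"

definition row_finite :: "nat \<Rightarrow> 'a kgraph \<Rightarrow> bool" where
  "row_finite k G \<longleftrightarrow> (\<forall>v\<in>vertices G. \<forall>n\<in>Nk k.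
      finite {l \<in> mors G. rng G l = v \<and> deg G l = n})"

definition no_sources :: "nat \<Rightarrow> 'a kgraph \<Rightarrow> bool" where
  "no_sources k G \<longleftrightarrow> (\<forall>v\<in>vertices G. \<forall>n\<in>Nk k.
      {l \<in> mors G. rng G l = v \<and> deg G l = n} \<noteq> {})"

text \<open>An infinite path is a degree preserving functor \<open>x : \<Omega>\<^sub>k \<rightarrow> \<Lambda>\<close>, written as
  \<open>x p q\<close> for the image of the morphism \<open>(p,q)\<close>, \<open>p \<le> q\<close>; it is \<open>undefined\<close> off the
  morphisms of \<open>\<Omega>\<^sub>k\<close> (so that paths are determined by their values on \<open>\<Omega>\<^sub>k\<close>).\<close>

type_synonym 'a ipath = "(nat \<Rightarrow> nat) \<Rightarrow> (nat \<Rightarrow> nat) \<Rightarrow> 'a"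

definition Omega_mor :: "nat \<Rightarrow> (nat \<Rightarrow> nat) \<Rightarrow> (nat \<Rightarrow> nat) \<Rightarrow> bool" where
  "Omega_mor k p q \<longleftrightarrow> p \<in> Nk k \<and> q \<in> Nk k \<and> p \<le> q"

definition inf_paths :: "nat \<Rightarrow> 'a kgraph \<Rightarrow> 'a ipath set" where
  "inf_paths k G = {x.
     (\<forall>p q. Omega_mor k p q \<longrightarrow> x p q \<in> mors G \<and> deg G (x p q) = q - p \<and>
              rng G (x p q) = x p p \<and> src G (x p q) = x q q) \<and>
     (\<forall>p q t. Omega_mor k p q \<longrightarrow> Omega_mor k q t \<longrightarrow> cmp G (x p q) (x q t) = x p t) \<and>
     (\<forall>p q. \<not> Omega_mor k p q \<longrightarrow> x p q = undefined)}"

definition shift :: "nat \<Rightarrow> (nat \<Rightarrow> nat) \<Rightarrow> 'a ipath \<Rightarrow> 'a ipath" where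
  "shift k m x = (\<lambda>p q. if Omega_mor k p q then x (p + m) (q + m) else undefined)"

definition orbit :: "nat \<Rightarrow> 'a kgraph \<Rightarrow> 'a ipath \<Rightarrow> 'a ipath set" where
  "orbit k G w = {y \<in> inf_paths k G. \<exists>m\<in>Nk k. \<exists>l\<in>Nk k. shift k m y = shift k l w}"

definition cylinder :: "nat \<Rightarrow> 'a kgraph \<Rightarrow> 'a \<Rightarrow> 'a ipath set" where
  "cylinder k G l = {x \<in> inf_paths k G. x 0 (deg G l) = l}"

definition borel_paths :: "nat \<Rightarrow> 'a kgraph \<Rightarrow> 'a ipath set set" where
  "borel_paths k G = sigma_sets (inf_paths k G) (cylinder k G ` mors G)"

definition is_rep :: "nat \<Rightarrow> 'a kgraph \<Rightarrow> ('a \<Rightarrow> 'h::chilbert \<Rightarrow> 'h) \<Rightarrow> bool" where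
  "is_rep k G t \<longleftrightarrow>
     (\<forall>l\<in>mors G. bclin (t l) \<and> is_projection (cadj (t l) \<circ> t l)) \<and>
     (\<forall>v\<in>vertices G. is_projection (t v)) \<and>
     (\<forall>v\<in>vertices G. \<forall>w\<in>vertices G. v \<noteq> w \<longrightarrow> t v \<circ> t w = 0) \<and>
     (\<forall>l\<in>mors G. \<forall>m\<in>mors G. src G l = rng G m \<longrightarrow> t l \<circ> t m = t (cmp G l m)) \<and>
     (\<forall>l\<in>mors G. cadj (t l) \<circ> t l = t (src G l)) \<and>
     (\<forall>v\<in>vertices G. \<forall>n\<in>Nk k.
        t v = (\<Sum>l\<in>{l \<in> mors G. rng G l = v \<and> deg G l = n}. t l \<circ> cadj (t l)))"

definition irreducible_rep :: "'a kgraph \<Rightarrow> ('a \<Rightarrow> 'h::chilbert \<Rightarrow> 'h) \<Rightarrow> bool" where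
  "irreducible_rep G t \<longleftrightarrow> (\<forall>M. closed_csubspace M \<longrightarrow>
      (\<forall>l\<in>mors G. t l ` M \<subseteq> M \<and> cadj (t l) ` M \<subseteq> M) \<longrightarrow> M = {0} \<or> M = UNIV)"

definition is_pvm :: "'p set \<Rightarrow> 'p set set \<Rightarrow> ('p set \<Rightarrow> 'h::chilbert \<Rightarrow> 'h) \<Rightarrow> bool" where
  "is_pvm X S P \<longleftrightarrow>
     (\<forall>A\<in>S. is_projection (P A)) \<and> P {} = 0 \<and>
     (\<forall>A\<in>S. \<forall>B\<in>S. P (A \<inter> B) = P A \<circ> P B) \<and>
     (\<forall>A. range A \<subseteq> S \<longrightarrow> disjoint_family A \<longrightarrow> (\<forall>x. (\<lambda>n. P (A n) x) sums P (\<Union>n. A n) x))"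

definition rep_pvm :: "nat \<Rightarrow> 'a kgraph \<Rightarrow> ('a \<Rightarrow> 'h::chilbert \<Rightarrow> 'h)
    \<Rightarrow> ('a ipath set \<Rightarrow> 'h \<Rightarrow> 'h) \<Rightarrow> bool" where
  "rep_pvm k G t P \<longleftrightarrow> is_pvm (inf_paths k G) (borel_paths k G) P \<and>
     (\<forall>l\<in>mors G. P (cylinder k G l) = t l \<circ> cadj (t l))"

definition purely_atomic :: "nat \<Rightarrow> 'a kgraph \<Rightarrow> ('a ipath set \<Rightarrow> 'h::chilbert \<Rightarrow> 'h) \<Rightarrow> bool" where
  "purely_atomic k G P \<longleftrightarrow> (\<exists>\<Omega>\<in>borel_paths k G.
      P (inf_paths k G - \<Omega>) = 0 \<and> (\<forall>w\<in>\<Omega>. P {w} \<noteq> 0) \<and>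
      (\<forall>x. ((\<lambda>w. P {w} x) has_sum x) \<Omega>))"

definition supported_on :: "nat \<Rightarrow> 'a kgraph \<Rightarrow> ('a ipath set \<Rightarrow> 'h::chilbert \<Rightarrow> 'h) \<Rightarrow> 'a ipath set \<Rightarrow> bool" where
  "supported_on k G P A \<longleftrightarrow> P (inf_paths k G - A) = 0"

end

theory Submission
  imports Defs
begin


lemma parallelogram:
  fixes x y :: "'a::real_inner"
  shows "norm (x + y)^2 + norm (x - y)^2 = 2 * norm x ^2 + 2 * norm y ^2"
  by (simp add: power2_norm_eq_inner inner_add_left inner_add_right inner_diff_left inner_diff_right inner_commute)

lemma riesz:
  fixes f :: "'a::{real_inner,complete_space} \<Rightarrow> real"
  assumes bl: "bounded_linear f"
  shows "\<exists>z. \<forall>x. f x = inner z x"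
proof (cases "\<forall>x. f x = 0")
  case True then show ?thesis by (intro exI[of _ 0]) auto
next
  case False
  then obtain a where fa: "f a \<noteq> 0" by auto
  interpret f: bounded_linear f by fact
  define K where "K = {x. f x = 0}"
  have K0: "0 \<in> K" by (simp add: K_def f.zero)
  have Kadd: "x \<in> K \<Longrightarrow> y \<in> K \<Longrightarrow> x + y \<in> K" for x y by (simp add: K_def f.add)
  have Kscale: "x \<in> K \<Longrightarrow> c *\<^sub>R x \<in> K" for x c by (simp add: K_def f.scaleR)
  have Kclosed: "closed K" unfolding K_def
    by (intro closed_Collect_eq f.continuous_on continuous_on_id continuous_on_const)
  define d where "d = Inf ((\<lambda>k. norm (a - k)) ` K)"
  have bdd: "bdd_below ((\<lambda>k. norm (a - k)) ` K)" by (auto intro: bdd_belowI[of _ 0])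
  have dle: "d \<le> norm (a - k)" if "k \<in> K" for k
    unfolding d_def using bdd that by (auto intro: cInf_lower)
  have d0: "0 \<le> d" unfolding d_def using K0 by (intro cInf_greatest) auto
  have "\<exists>k\<in>K. norm (a - k) < d + 1 / (Suc n)" for n
  proof -
    have "Inf ((\<lambda>k. norm (a - k)) ` K) < d + 1 / Suc n" unfolding d_def by simp
    then show ?thesis using K0 by (subst (asm) cInf_less_iff) (auto simp: bdd)
  qed
  then obtain ks where ksK: "\<And>n. ks n \<in> K" and ksd: "\<And>n. norm (a - ks n) < d + 1 / Suc n"
    by metis
  define e where "e n = 1 / real (Suc n)" for n
  have e0: "0 < e n" for n by (simp add: e_def)
  have bound: "norm (ks m - ks n)^2 \<le> 4 * d * (e m + e n) + 2 * e m ^2 + 2 * e n ^2" for m n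
  proof -
    let ?x = "a - ks m" and ?y = "a - ks n"
    have mid: "(1/2) *\<^sub>R (ks m + ks n) \<in> K" using ksK Kadd Kscale by auto
    have "?x + ?y = 2 *\<^sub>R (a - (1/2) *\<^sub>R (ks m + ks n))" by (simp add: algebra_simps scaleR_2)
    then have "norm (?x + ?y) = 2 * norm (a - (1/2) *\<^sub>R (ks m + ks n))" by simp
    then have h1: "norm (?x + ?y) \<ge> 2 * d" using dle[OF mid] by simp
    have h2: "norm (?x + ?y)^2 \<ge> 4 * d^2"
    proof -
      have "(2*d)^2 \<le> norm (?x + ?y)^2" using h1 d0 by (intro power_mono) auto
      then show ?thesis by (simp add: power2_eq_square)
    qed
    have "?x - ?y = ks n - ks m" by simp
    then have "norm (ks m - ks n) = norm (?x - ?y)" by (simp add: norm_minus_commute)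
    moreover have "norm ?x ^2 \<le> (d + e m)^2" using ksd[of m] d0 unfolding e_def
      by (intro power_mono) auto
    moreover have "norm ?y ^2 \<le> (d + e n)^2" using ksd[of n] d0 unfolding e_def
      by (intro power_mono) auto
    ultimately show ?thesis using parallelogram[of ?x ?y] h2
      by (simp add: power2_eq_square algebra_simps)
  qed
  have "Cauchy ks"
  proof (rule metric_CauchyI)
    fix eps :: real assume eps: "eps > 0"
    define c where "c = 8 * d + 4"
    have c0: "c > 0" using d0 by (simp add: c_def)
    obtain N where N: "1 / real (Suc N) < eps^2 / c"
      using eps c0 by (metis divide_pos_pos nat_approx_posE zero_less_power)
    have eN: "e n \<le> e N" if "n \<ge> N" for n unfolding e_def using that
      by (intro divide_left_mono) auto
    have eN1: "e N \<le> 1" unfolding e_def by simp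
    show "\<exists>M. \<forall>m\<ge>M. \<forall>n\<ge>M. dist (ks m) (ks n) < eps"
    proof (intro exI allI impI)
      fix m n assume m: "m \<ge> N" and n: "n \<ge> N"
      have em: "e m \<le> e N" "e n \<le> e N" using eN m n by auto
      have "e m ^2 \<le> e m" "e n ^2 \<le> e n"
        using em eN1 e0[of m] e0[of n] by (auto simp: power2_eq_square intro: mult_le_one[THEN order_trans] mult_left_le)
      then have "norm (ks m - ks n)^2 \<le> 4 * d * (e m + e n) + 2 * e m + 2 * e n"
        using bound[of m n] by linarith
      also have "\<dots> \<le> c * e N"
      proof -
        have "d * e m \<le> d * e N" "d * e n \<le> d * e N" using em d0 by (auto intro: mult_left_mono)
        then show ?thesis unfolding c_def using em by (simp add: algebra_simps)
      qed
      also have "\<dots> < eps^2" using N c0 unfolding e_def by (simp add: field_simps)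
      finally have "norm (ks m - ks n)^2 < eps^2" .
      then show "dist (ks m) (ks n) < eps" using eps
        by (simp add: dist_norm power_less_imp_less_base)
    qed
  qed
  then obtain p where p: "ks \<longlonglongrightarrow> p" using convergent_eq_Cauchy by blast
  have pK: "p \<in> K" using Kclosed p ksK closed_sequentially by blast
  have pmin: "norm (a - p) \<le> norm (a - k)" if "k \<in> K" for k
  proof -
    have "(\<lambda>n. norm (a - ks n)) \<longlonglongrightarrow> norm (a - p)" by (intro tendsto_intros p)
    moreover have "(\<lambda>n. d + 1 / real (Suc n)) \<longlonglongrightarrow> d + 0"
      by (intro tendsto_intros LIMSEQ_Suc[OF lim_inverse_n'[unfolded inverse_eq_divide]])
    ultimately have "norm (a - p) \<le> d" using ksd
      by (intro LIMSEQ_le[of "\<lambda>n. norm (a - ks n)" _ "\<lambda>n. d + 1 / real (Suc n)"]) (auto intro: less_imp_le)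
    then show ?thesis using dle[OF that] by simp
  qed
  define u where "u = a - p"
  have fu: "f u = f a" using pK by (simp add: u_def K_def f.diff)
  have orth: "inner u k = 0" if "k \<in> K" for k
  proof (cases "k = 0")
    case True then show ?thesis by simp
  next
    case False
    define s where "s = inner u k / (norm k)^2"
    have "p + s *\<^sub>R k \<in> K" using pK that Kadd Kscale by auto
    then have "norm u \<le> norm (u - s *\<^sub>R k)" using pmin unfolding u_def by (simp add: algebra_simps)
    then have "norm u ^2 \<le> norm (u - s *\<^sub>R k) ^2" by (simp add: power_mono)
    also have "\<dots> = norm u ^2 - 2 * s * inner u k + s^2 * norm k ^2"
      by (simp only: power2_norm_eq_inner inner_diff_left inner_diff_right inner_scaleR_left inner_scaleR_right)
        (simp add: inner_commute algebra_simps power2_eq_square)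
    also have "\<dots> = norm u ^2 - (inner u k)^2 / (norm k)^2"
      using False by (simp add: s_def power2_eq_square field_simps)
    finally have "(inner u k)^2 / (norm k)^2 \<le> 0" by simp
    then have "(inner u k)^2 \<le> 0" using False by (simp add: divide_le_0_iff)
    then show ?thesis by simp
  qed
  have u0: "u \<noteq> 0" using fu fa f.zero by auto
  show ?thesis
  proof (intro exI allI)
    fix x
    have "x - (f x / f u) *\<^sub>R u \<in> K" using fa fu by (simp add: K_def f.diff f.scaleR)
    then have "inner u (x - (f x / f u) *\<^sub>R u) = 0" by (rule orth)
    then have "inner u x = (f x / f u) * (norm u)^2" by (simp add: inner_diff_right power2_norm_eq_inner)
    then show "f x = inner ((f u / (norm u)^2) *\<^sub>R u) x" using u0 fa fu by (simp add: field_simps)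
  qed
qed


lemma cinner_Im: "Im (cinner a b) = inner (scaleC \<i> a) b"
proof -
  have "cinner (scaleC \<i> a) b = cnj (\<i> * cinner b a)"
    by (simp add: cinner_conj[of "scaleC \<i> a" b] cinner_scaleC_right)
  also have "\<dots> = - \<i> * cinner a b" by (simp add: cinner_conj[of b a])
  finally show ?thesis by (simp add: Re_cinner[symmetric])
qed

lemma inner_eqI_right: "(\<And>x. inner x u = inner x (v::'a::real_inner)) \<Longrightarrow> u = v"
  by (metis inner_diff_right inner_eq_zero_iff right_minus_eq)

lemma adj_ex:
  fixes T :: "'h::chilbert \<Rightarrow> 'h"
  assumes "bclin T"
  shows "\<exists>S. \<forall>x y. cinner (T x) y = cinner x (S y)"
proof -
  have bl: "bounded_linear T" and sc: "\<And>c x. T (scaleC c x) = scaleC c (T x)"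
    using assms by (auto simp: bclin_def)
  have "\<forall>y. \<exists>z. \<forall>x. inner (T x) y = inner z x"
  proof
    fix y
    have "bounded_linear (\<lambda>x. inner (T x) y)"
      using bounded_linear_compose[OF bounded_linear_inner_left bl] by (simp add: o_def)
    then show "\<exists>z. \<forall>x. inner (T x) y = inner z x" by (rule riesz)
  qed
  then obtain S where S: "\<And>x y. inner (T x) y = inner (S y) x" by metis
  show ?thesis
  proof (intro exI allI)
    fix x y
    show "cinner (T x) y = cinner x (S y)"
    proof (rule complex_eqI)
      show "Re (cinner (T x) y) = Re (cinner x (S y))"
        by (simp only: Re_cinner S) (rule inner_commute)
      show "Im (cinner (T x) y) = Im (cinner x (S y))"
        by (simp only: cinner_Im sc[symmetric] S) (rule inner_commute)
    qed
  qed
qed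

lemma cadj_eqI:
  fixes T :: "'h::chilbert \<Rightarrow> 'h"
  assumes "bclin T" and S: "\<And>x y. cinner (T x) y = cinner x (S y)"
  shows "cadj T = S"
  unfolding cadj_def
proof (rule the_equality)
  show "\<forall>x y. cinner (T x) y = cinner x (S y)" using S by blast
  fix S' assume S': "\<forall>x y. cinner (T x) y = cinner x (S' y)"
  show "S' = S"
  proof
    fix y
    show "S' y = S y"
    proof (rule inner_eqI_right)
      fix x
      have "cinner x (S' y) = cinner x (S y)" using S S' by metis
      then show "inner x (S' y) = inner x (S y)" by (metis Re_cinner)
    qed
  qed
qed

lemma cadj_c:
  fixes T :: "'h::chilbert \<Rightarrow> 'h"
  assumes "bclin T"
  shows "cinner (T x) y = cinner x (cadj T y)"
proof -
  obtain S where S: "\<forall>x y. cinner (T x) y = cinner x (S y)" using adj_ex[OF assms] by blast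
  then have "cadj T = S" using cadj_eqI[OF assms] by blast
  then show ?thesis using S by simp
qed

lemma cadj_inner:
  fixes T :: "'h::chilbert \<Rightarrow> 'h"
  assumes "bclin T"
  shows "inner (T x) y = inner x (cadj T y)"
  using cadj_c[OF assms, of x y] by (metis Re_cinner)

lemma cadj_bl:
  fixes T :: "'h::chilbert \<Rightarrow> 'h"
  assumes "bclin T"
  shows "bounded_linear (cadj T)"
proof -
  have bl: "bounded_linear T" using assms by (simp add: bclin_def)
  obtain K where K: "K > 0" "\<And>x. norm (T x) \<le> norm x * K"
    using bounded_linear.pos_bounded[OF bl] by blast
  note I = cadj_inner[OF assms]
  show ?thesis
  proof (rule bounded_linear_intro)
    fix a b
    show "cadj T (a + b) = cadj T a + cadj T b"
      by (rule inner_eqI_right) (simp add: I[symmetric] inner_add_right)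
  next
    fix r a
    show "cadj T (r *\<^sub>R a) = r *\<^sub>R cadj T a"
      by (rule inner_eqI_right) (simp add: I[symmetric] inner_scaleR_right)
  next
    fix y
    have "norm (cadj T y) ^2 = inner (T (cadj T y)) y"
      by (simp add: I power2_norm_eq_inner)
    also have "\<dots> \<le> norm (T (cadj T y)) * norm y" by (rule norm_cauchy_schwarz)
    also have "\<dots> \<le> norm (cadj T y) * K * norm y" using K by (simp add: mult_right_mono)
    finally have h: "norm (cadj T y) * norm (cadj T y) \<le> norm (cadj T y) * (K * norm y)"
      by (simp add: power2_eq_square algebra_simps)
    show "norm (cadj T y) \<le> norm y * K"
    proof (cases "cadj T y = 0")
      case True then show ?thesis using K by simp
    next
      case False
      then have "norm (cadj T y) > 0" by simp
      with h have "norm (cadj T y) \<le> K * norm y" by (simp add: mult_le_cancel_left)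
      then show ?thesis by (simp add: mult.commute)
    qed
  qed
qed

lemma bclin_comp: "bclin A \<Longrightarrow> bclin B \<Longrightarrow> bclin (A \<circ> B)"
  unfolding bclin_def o_def by (auto intro: bounded_linear_compose)

lemma cadj_comp:
  fixes A B :: "'h::chilbert \<Rightarrow> 'h"
  assumes "bclin A" "bclin B"
  shows "cadj (A \<circ> B) = cadj B \<circ> cadj A"
  by (rule cadj_eqI[OF bclin_comp[OF assms]]) (simp add: cadj_c assms)

lemma proj_bclin: "is_projection E \<Longrightarrow> bclin E"
  by (simp add: is_projection_def)

lemma proj_bl: "is_projection E \<Longrightarrow> bounded_linear E"
  by (simp add: is_projection_def bclin_def)

lemma proj_idem: "is_projection E \<Longrightarrow> E (E x) = E x"
  unfolding is_projection_def by (metis comp_apply)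

lemma proj_sym:
  fixes E :: "'h::chilbert \<Rightarrow> 'h"
  shows "is_projection E \<Longrightarrow> inner (E x) y = inner x (E y)"
  using cadj_inner[of E x y] unfolding is_projection_def by simp

lemma proj_norm:
  fixes E :: "'h::chilbert \<Rightarrow> 'h"
  assumes "is_projection E"
  shows "norm (E x) \<le> norm x"
proof -
  have "norm (E x) ^2 = inner (E x) x"
    using proj_sym[OF assms, of "E x" x] proj_idem[OF assms] by (simp add: power2_norm_eq_inner)
  also have "\<dots> \<le> norm (E x) * norm x" by (rule norm_cauchy_schwarz)
  finally have "norm (E x) * norm (E x) \<le> norm (E x) * norm x" by (simp add: power2_eq_square)
  then show ?thesis
    by (cases "E x = 0") (auto simp: mult_le_cancel_left)
qed



locale pvmc = sigma_algebra X S for X :: "'p set" and S +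
  fixes P :: "'p set \<Rightarrow> 'h::chilbert \<Rightarrow> 'h"
  assumes pvm: "is_pvm X S P"
begin

lemma proj: "A \<in> S \<Longrightarrow> is_projection (P A)"
  using pvm by (simp add: is_pvm_def)

lemma bl: "A \<in> S \<Longrightarrow> bounded_linear (P A)"
  using proj proj_bl by blast

lemma empty[simp]: "P {} x = 0"
  using pvm by (simp add: is_pvm_def)

lemma inter: "A \<in> S \<Longrightarrow> B \<in> S \<Longrightarrow> P (A \<inter> B) x = P A (P B x)"
  using pvm by (simp add: is_pvm_def)

lemma comm: "A \<in> S \<Longrightarrow> B \<in> S \<Longrightarrow> P A (P B x) = P B (P A x)"
  using inter by (metis Int_commute)

lemma csum: "range A \<subseteq> S \<Longrightarrow> disjoint_family A \<Longrightarrow> (\<lambda>n. P (A n) x) sums P (\<Union>n. A n) x"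
  using pvm by (simp add: is_pvm_def)

lemma un2:
  assumes "A \<in> S" "B \<in> S" "A \<inter> B = {}"
  shows "P (A \<union> B) x = P A x + P B x"
proof -
  define F where "F n = (if n = 0 then A else if n = 1 then B else {})" for n :: nat
  have "range F \<subseteq> S" using assms by (auto simp: F_def)
  moreover have "disjoint_family F" using assms
    by (auto simp: F_def disjoint_family_on_def)
  ultimately have s: "(\<lambda>n. P (F n) x) sums P (\<Union>n. F n) x" by (rule csum)
  have F01: "F 0 = A" "F 1 = B" by (simp_all add: F_def)
  have U: "(\<Union>n. F n) = A \<union> B"
  proof (rule equalityI)
    show "(\<Union>n. F n) \<subseteq> A \<union> B" by (auto simp: F_def split: if_splits)
    show "A \<union> B \<subseteq> (\<Union>n. F n)" using F01 by blast
  qed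
  have "(\<lambda>n. P (F n) x) sums (\<Sum>n\<in>{0,1}. P (F n) x)"
    by (rule sums_finite) (auto simp: F_def)
  then have "(\<lambda>n. P (F n) x) sums (P A x + P B x)" by (simp add: F_def)
  with s U show ?thesis using sums_unique2 by metis
qed

lemma fin_un:
  fixes n :: nat and x :: 'h
  assumes "range D \<subseteq> S" "disjoint_family D"
  shows "P (\<Union>i<n. D i) x = (\<Sum>i<n. P (D i) x)"
proof (induction n)
  case 0 then show ?case by simp
next
  case (Suc n)
  have "(\<Union>i<Suc n. D i) = (\<Union>i<n. D i) \<union> D n" by (auto simp: lessThan_Suc)
  moreover have "(\<Union>i<n. D i) \<in> S" using assms by auto
  moreover have "(\<Union>i<n. D i) \<inter> D n = {}" using assms(2)
    by (auto simp: disjoint_family_on_def) (metis IntI empty_iff less_irrefl_nat)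
  moreover have "D n \<in> S" using assms by auto
  ultimately have "P (\<Union>i<Suc n. D i) x = P (\<Union>i<n. D i) x + P (D n) x"
    using un2[of "\<Union>i<n. D i" "D n" x] by simp
  then show ?case using Suc.IH by simp
qed

lemma incr:
  assumes "range A \<subseteq> S" "\<And>n. A n \<subseteq> A (Suc n)"
  shows "(\<lambda>n. P (A n) x) \<longlonglongrightarrow> P (\<Union>n. A n) x"
proof -
  have r: "range (disjointed A) \<subseteq> S" using assms(1) by (rule range_disjointed_sets)
  have "(\<lambda>n. P (disjointed A n) x) sums P (\<Union>n. disjointed A n) x"
    using r disjoint_family_disjointed by (rule csum)
  then have "(\<lambda>n. \<Sum>i<n. P (disjointed A i) x) \<longlonglongrightarrow> P (\<Union>n. A n) x"
    by (simp add: sums_def UN_disjointed_eq)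
  then have "(\<lambda>n. P (\<Union>i<n. disjointed A i) x) \<longlonglongrightarrow> P (\<Union>n. A n) x"
    by (simp add: fin_un[OF r disjoint_family_disjointed])
  then have L: "(\<lambda>n. P (\<Union>i<n. A i) x) \<longlonglongrightarrow> P (\<Union>n. A n) x"
    using finite_UN_disjointed_eq[of A] by (simp add: atLeast0LessThan)
  have "(\<lambda>n. P (\<Union>i<Suc n. A i) x) \<longlonglongrightarrow> P (\<Union>n. A n) x"
    using LIMSEQ_Suc[OF L] by simp
  moreover have "(\<Union>i<Suc n. A i) = A n" for n
  proof -
    have "A i \<subseteq> A n" if "i \<le> n" for i using that
      by (rule lift_Suc_mono_le[of A, OF assms(2)])
    then show ?thesis unfolding lessThan_Suc_atMost by blast
  qed
  ultimately show ?thesis by simp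
qed

lemma decr:
  assumes "range B \<subseteq> S" "\<And>n. B (Suc n) \<subseteq> B n"
  shows "(\<lambda>n. P (B n) x) \<longlonglongrightarrow> P (\<Inter>n. B n) x"
proof -
  have BX: "B n \<subseteq> X" for n using assms(1) sets_into_space by auto
  have "(\<lambda>n. P (X - B n) x) \<longlonglongrightarrow> P (\<Union>n. X - B n) x"
    using assms by (intro incr) auto
  moreover have "(\<Union>n. X - B n) = X - (\<Inter>n. B n)" by auto
  moreover have Xs: "\<And>C. C \<in> S \<Longrightarrow> C \<subseteq> X \<Longrightarrow> P X x = P (X - C) x + P C x"
  proof -
    fix C assume "C \<in> S" "C \<subseteq> X"
    have e: "(X - C) \<union> C = X" using \<open>C \<subseteq> X\<close> by auto
    have "P ((X - C) \<union> C) x = P (X - C) x + P C x"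
      using \<open>C \<in> S\<close> by (intro un2) auto
    then show "P X x = P (X - C) x + P C x" by (simp only: e)
  qed
  have Bi: "(\<Inter>n. B n) \<in> S" using assms(1) by auto
  have "P (X - B n) x = P X x - P (B n) x" for n
  proof -
    have "B n \<in> S" using assms(1) by auto
    then show ?thesis using Xs[of "B n"] BX[of n] by (simp add: eq_diff_eq)
  qed
  moreover have "P (X - (\<Inter>n. B n)) x = P X x - P (\<Inter>n. B n) x"
  proof -
    have "(\<Inter>n. B n) \<subseteq> X" using BX by blast
    then show ?thesis using Xs[OF Bi] by (simp add: eq_diff_eq)
  qed
  ultimately have "(\<lambda>n. P X x - P (B n) x) \<longlonglongrightarrow> P X x - P (\<Inter>n. B n) x" by simp
  from tendsto_diff[OF tendsto_const[of "P X x"] this]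
  show ?thesis by simp
qed

lemma countable_in: "countable C \<Longrightarrow> C \<subseteq> X \<Longrightarrow> (\<And>w. w \<in> X \<Longrightarrow> {w} \<in> S) \<Longrightarrow> C \<in> S"
  by (rule countable) auto

lemma fin_sum:
  assumes "finite F" "F \<subseteq> X" "\<And>w. w \<in> X \<Longrightarrow> {w} \<in> S"
  shows "P F x = (\<Sum>w\<in>F. P {w} x)"
  using assms(1,2)
proof (induction F rule: finite_induct)
  case empty then show ?case by simp
next
  case (insert a F)
  have FX: "F \<subseteq> X" and aX: "a \<in> X" using insert.prems by auto
  have F1: "F \<in> S" by (rule countable_in[OF countable_finite[OF insert.hyps(1)] FX assms(3)])
  have F2: "{a} \<in> S" using aX assms(3) by blast
  have F3: "{a} \<inter> F = {}" using insert.hyps(2) by blast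
  have "P ({a} \<union> F) x = P {a} x + P F x" by (rule un2[OF F2 F1 F3])
  moreover have "P F x = (\<Sum>w\<in>F. P {w} x)" using insert.IH FX by blast
  ultimately show ?case using insert.hyps by simp
qed

end



definition Dg :: "nat \<Rightarrow> nat \<Rightarrow> nat \<Rightarrow> nat" where
  "Dg k n = (\<lambda>i. if i < k then n else 0)"

lemma Nk_add: "a \<in> Nk k \<Longrightarrow> b \<in> Nk k \<Longrightarrow> a + b \<in> Nk k" by (simp add: Nk_def)
lemma Nk_diff: "a \<in> Nk k \<Longrightarrow> a - b \<in> Nk k" by (simp add: Nk_def)
lemma Nk_0: "0 \<in> Nk k" by (simp add: Nk_def)
lemma Nk_D: "Dg k n \<in> Nk k" by (simp add: Nk_def Dg_def)
lemma D_0: "Dg k 0 = 0" by (simp add: Dg_def fun_eq_iff)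
lemma D_mono: "Dg k n \<le> Dg k (Suc n)" by (simp add: Dg_def le_fun_def)
lemma Nk_max: "a \<in> Nk k \<Longrightarrow> b \<in> Nk k \<Longrightarrow> (\<lambda>i. max (a i) (b i)) \<in> Nk k" by (simp add: Nk_def)
lemma Nk_le_D:
  assumes "q \<in> Nk k" shows "q \<le> Dg k (\<Sum>i<k. q i)"
  unfolding le_fun_def Dg_def
proof
  fix i show "q i \<le> (if i < k then \<Sum>i<k. q i else 0)"
  proof (cases "i < k")
    case True then show ?thesis by (auto intro: member_le_sum)
  next
    case False then show ?thesis using assms by (simp add: Nk_def)
  qed
qed

lemma countable_Nk: "countable (Nk k)"
proof (rule countable_image_inj_on)
  show "countable ((\<lambda>f. map f [0..<k]) ` Nk k)" by (rule countableI_type)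
  show "inj_on (\<lambda>f. map f [0..<k]) (Nk k)"
  proof (rule inj_onI)
    fix f g assume f: "f \<in> Nk k" and g: "g \<in> Nk k" and e: "map f [0..<k] = map g [0..<k]"
    show "f = g"
    proof
      fix i show "f i = g i"
      proof (cases "i < k")
        case True then show ?thesis using e by (simp add: map_eq_conv)
      next
        case False then show ?thesis using f g by (simp add: Nk_def)
      qed
    qed
  qed
qed

lemma Om_iff: "Omega_mor k p q \<longleftrightarrow> p \<in> Nk k \<and> q \<in> Nk k \<and> p \<le> q"
  by (simp add: Omega_mor_def)

locale kg =
  fixes k :: nat and G :: "'a kgraph"
  assumes kg: "is_kgraph k G"
begin

lemma rng_in: "l \<in> mors G \<Longrightarrow> rng G l \<in> mors G" using kg by (simp add: is_kgraph_def)
lemma src_in: "l \<in> mors G \<Longrightarrow> src G l \<in> mors G" using kg by (simp add: is_kgraph_def)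
lemma rng_rng: "l \<in> mors G \<Longrightarrow> rng G (rng G l) = rng G l" using kg by (simp add: is_kgraph_def)
lemma src_rng: "l \<in> mors G \<Longrightarrow> src G (rng G l) = rng G l" using kg by (simp add: is_kgraph_def)
lemma rng_src: "l \<in> mors G \<Longrightarrow> rng G (src G l) = src G l" using kg by (simp add: is_kgraph_def)
lemma src_src: "l \<in> mors G \<Longrightarrow> src G (src G l) = src G l" using kg by (simp add: is_kgraph_def)
lemma cmp_rng: "l \<in> mors G \<Longrightarrow> cmp G (rng G l) l = l" using kg by (simp add: is_kgraph_def)
lemma cmp_src: "l \<in> mors G \<Longrightarrow> cmp G l (src G l) = l" using kg by (simp add: is_kgraph_def)
lemma deg_in: "l \<in> mors G \<Longrightarrow> deg G l \<in> Nk k" using kg by (simp add: is_kgraph_def)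
lemma cmp_in: "l \<in> mors G \<Longrightarrow> m \<in> mors G \<Longrightarrow> src G l = rng G m \<Longrightarrow> cmp G l m \<in> mors G"
  using kg by (simp add: is_kgraph_def)
lemma rng_cmp: "l \<in> mors G \<Longrightarrow> m \<in> mors G \<Longrightarrow> src G l = rng G m \<Longrightarrow> rng G (cmp G l m) = rng G l"
  using kg by (simp add: is_kgraph_def)
lemma src_cmp: "l \<in> mors G \<Longrightarrow> m \<in> mors G \<Longrightarrow> src G l = rng G m \<Longrightarrow> src G (cmp G l m) = src G m"
  using kg by (simp add: is_kgraph_def)
lemma deg_cmp: "l \<in> mors G \<Longrightarrow> m \<in> mors G \<Longrightarrow> src G l = rng G m \<Longrightarrow> deg G (cmp G l m) = deg G l + deg G m"
  using kg by (simp add: is_kgraph_def)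

lemma uniq:
  assumes "a \<in> mors G" "b \<in> mors G" "a' \<in> mors G" "b' \<in> mors G"
    "src G a = rng G b" "src G a' = rng G b'" "cmp G a b = cmp G a' b'"
    "deg G a = deg G a'" "deg G b = deg G b'"
  shows "a = a' \<and> b = b'"
proof -
  have l: "cmp G a b \<in> mors G" using assms cmp_in by blast
  have "\<exists>!p. fst p \<in> mors G \<and> snd p \<in> mors G \<and> src G (fst p) = rng G (snd p) \<and>
              cmp G (fst p) (snd p) = cmp G a b \<and> deg G (fst p) = deg G a \<and> deg G (snd p) = deg G b"
    using kg l deg_in[OF assms(1)] deg_in[OF assms(2)] deg_cmp[OF assms(1,2,5)]
    unfolding is_kgraph_def by blast
  then have "(a, b) = (a', b')" using assms by (auto elim!: ex1E) (metis fst_conv snd_conv)+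
  then show ?thesis by simp
qed

lemma deg_rng: "l \<in> mors G \<Longrightarrow> deg G (rng G l) = 0"
proof -
  assume l: "l \<in> mors G"
  have "deg G (cmp G (rng G l) l) = deg G (rng G l) + deg G l"
    using l by (intro deg_cmp) (auto simp: rng_in src_rng)
  then have "deg G (rng G l) + deg G l = 0 + deg G l" using cmp_rng[OF l] by simp
  then show ?thesis by (simp add: fun_eq_iff)
qed

lemma deg_src: "l \<in> mors G \<Longrightarrow> deg G (src G l) = 0"
  using deg_rng[OF src_in] rng_src by metis

section \<open>paths\<close>

lemma path_mor: "x \<in> inf_paths k G \<Longrightarrow> Omega_mor k p q \<Longrightarrow>
   x p q \<in> mors G \<and> deg G (x p q) = q - p \<and> rng G (x p q) = x p p \<and> src G (x p q) = x q q"
  by (simp add: inf_paths_def)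

lemma path_cmp: "x \<in> inf_paths k G \<Longrightarrow> Omega_mor k p q \<Longrightarrow> Omega_mor k q r \<Longrightarrow> cmp G (x p q) (x q r) = x p r"
  by (simp add: inf_paths_def)

lemma path_undef: "x \<in> inf_paths k G \<Longrightarrow> \<not> Omega_mor k p q \<Longrightarrow> x p q = undefined"
  by (simp add: inf_paths_def)

lemma path_split:
  assumes x: "x \<in> inf_paths k G" and y: "y \<in> inf_paths k G"
    and pq: "Omega_mor k p q" and qr: "Omega_mor k q r" and e: "x p r = y p r"
  shows "x p q = y p q \<and> x q r = y q r"
proof (rule uniq)
  show "x p q \<in> mors G" "x q r \<in> mors G" "y p q \<in> mors G" "y q r \<in> mors G"
    using path_mor[OF x pq] path_mor[OF x qr] path_mor[OF y pq] path_mor[OF y qr] by auto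
  show "src G (x p q) = rng G (x q r)" "src G (y p q) = rng G (y q r)"
    using path_mor[OF x pq] path_mor[OF x qr] path_mor[OF y pq] path_mor[OF y qr] by auto
  show "cmp G (x p q) (x q r) = cmp G (y p q) (y q r)"
    using path_cmp[OF x pq qr] path_cmp[OF y pq qr] e by simp
  show "deg G (x p q) = deg G (y p q)" "deg G (x q r) = deg G (y q r)"
    using path_mor[OF x pq] path_mor[OF x qr] path_mor[OF y pq] path_mor[OF y qr] by auto
qed

lemma path_seg:
  assumes x: "x \<in> inf_paths k G" and y: "y \<in> inf_paths k G"
    and p: "p \<in> Nk k" and q: "q \<in> Nk k" and r: "r \<in> Nk k" and pq: "p \<le> q" and qr: "q \<le> r"
    and e: "x 0 r = y 0 r"
  shows "x p q = y p q"
proof -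
  have le0: "0 \<le> p" "0 \<le> q" by (rule le_funI, simp)+
  have zq: "Omega_mor k 0 q" by (intro Om_iff[THEN iffD2] conjI Nk_0 q le0)
  have qr': "Omega_mor k q r" by (intro Om_iff[THEN iffD2] conjI q r qr)
  have zp: "Omega_mor k 0 p" by (intro Om_iff[THEN iffD2] conjI Nk_0 p le0)
  have pq': "Omega_mor k p q" by (intro Om_iff[THEN iffD2] conjI p q pq)
  have e2: "x 0 q = y 0 q" using path_split[OF x y zq qr'] e by blast
  show ?thesis using path_split[OF x y zp pq'] e2 by blast
qed

lemma path_ext:
  assumes x: "x \<in> inf_paths k G" and y: "y \<in> inf_paths k G"
    and e: "\<And>n. x 0 (Dg k n) = y 0 (Dg k n)"
  shows "x = y"
proof (intro ext)
  fix p q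
  show "x p q = y p q"
  proof (cases "Omega_mor k p q")
    case True
    then have p: "p \<in> Nk k" and q: "q \<in> Nk k" and pq: "p \<le> q" by (auto simp: Om_iff)
    show ?thesis
      using path_seg[OF x y p q Nk_D pq Nk_le_D[OF q]] e by blast
  next
    case False then show ?thesis using path_undef[OF x] path_undef[OF y] by simp
  qed
qed

lemma Om_shift: "Omega_mor k p q \<Longrightarrow> m \<in> Nk k \<Longrightarrow> Omega_mor k (p + m) (q + m)"
  by (auto simp: Om_iff Nk_add le_fun_def)

lemma shift_app: "Omega_mor k p q \<Longrightarrow> shift k m x p q = x (p + m) (q + m)"
  by (simp add: shift_def)

lemma shift_path:
  assumes x: "x \<in> inf_paths k G" and m: "m \<in> Nk k"
  shows "shift k m x \<in> inf_paths k G"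
  unfolding inf_paths_def
proof (intro CollectI conjI allI impI)
  fix p q assume pq: "Omega_mor k p q"
  have pp: "Omega_mor k p p" "Omega_mor k q q" using pq by (auto simp: Om_iff)
  note M = path_mor[OF x Om_shift[OF pq m]]
  show "shift k m x p q \<in> mors G" using M by (simp add: shift_app[OF pq])
  show "deg G (shift k m x p q) = q - p" using M by (simp add: shift_app[OF pq] fun_eq_iff)
  show "rng G (shift k m x p q) = shift k m x p p" using M by (simp add: shift_app[OF pq] shift_app[OF pp(1)])
  show "src G (shift k m x p q) = shift k m x q q" using M by (simp add: shift_app[OF pq] shift_app[OF pp(2)])
next
  fix p q t assume pq: "Omega_mor k p q" and qt: "Omega_mor k q t"
  have pt: "Omega_mor k p t" using pq qt by (auto simp: Om_iff)
  show "cmp G (shift k m x p q) (shift k m x q t) = shift k m x p t"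
    using path_cmp[OF x Om_shift[OF pq m] Om_shift[OF qt m]]
    by (simp add: shift_app[OF pq] shift_app[OF qt] shift_app[OF pt])
next
  fix p q assume "\<not> Omega_mor k p q"
  then show "shift k m x p q = undefined" by (simp add: shift_def)
qed

lemma shift_shift:
  assumes "a \<in> Nk k"
  shows "shift k a (shift k b x) = shift k (a + b) x"
proof (intro ext)
  fix p q
  show "shift k a (shift k b x) p q = shift k (a + b) x p q"
  proof (cases "Omega_mor k p q")
    case True
    then show ?thesis using Om_shift[OF True assms]
      by (simp add: shift_app add.assoc)
  next
    case False then show ?thesis by (simp add: shift_def)
  qed
qed

section \<open>cylinders\<close>

lemma cyl_sub: "cylinder k G l \<subseteq> inf_paths k G" by (auto simp: cylinder_def)

lemma path_0N: "x \<in> inf_paths k G \<Longrightarrow> N \<in> Nk k \<Longrightarrow> Omega_mor k 0 N"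
  by (simp add: Om_iff Nk_0)

lemma cyl_comp:
  assumes l: "l \<in> mors G" and mu: "mu \<in> mors G" and lm: "src G l = rng G mu"
  shows "cylinder k G (cmp G l mu) = {y \<in> cylinder k G l. shift k (deg G l) y \<in> cylinder k G mu}"
proof -
  define N where "N = deg G l"
  define M where "M = deg G mu"
  have N: "N \<in> Nk k" and M: "M \<in> Nk k" using deg_in l mu by (auto simp: N_def M_def)
  have R: "deg G (cmp G l mu) = N + M" using deg_cmp[OF l mu lm] by (simp add: N_def M_def)
  have NR: "Omega_mor k N (N + M)" using N M by (auto simp: Om_iff Nk_add le_fun_def)
  have zN: "Omega_mor k 0 N" using N by (simp add: Om_iff Nk_0)
  have zM: "Omega_mor k 0 M" using M by (simp add: Om_iff Nk_0)
  have cm: "cmp G l mu \<in> mors G" using cmp_in[OF l mu lm] .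
  show ?thesis
  proof (intro set_eqI iffI)
    fix y assume "y \<in> cylinder k G (cmp G l mu)"
    then have y: "y \<in> inf_paths k G" and e: "y 0 (N + M) = cmp G l mu"
      by (auto simp: cylinder_def R)
    have sp: "shift k N y 0 M = y N (N + M)"
      using shift_app[OF zM, of N y] by (subst add.commute[of N M]) simp
    have "y 0 N = l \<and> y N (N + M) = mu"
    proof (rule uniq)
      show "y 0 N \<in> mors G" "y N (N + M) \<in> mors G" using path_mor[OF y zN] path_mor[OF y NR] by auto
      show "src G (y 0 N) = rng G (y N (N + M))" using path_mor[OF y zN] path_mor[OF y NR] by auto
      show "cmp G (y 0 N) (y N (N + M)) = cmp G l mu" using path_cmp[OF y zN NR] e by simp
      show "deg G (y 0 N) = deg G l" using path_mor[OF y zN] by (simp add: N_def)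
      show "deg G (y N (N + M)) = deg G mu" using path_mor[OF y NR] by (simp add: M_def fun_eq_iff)
    qed (use l mu lm in auto)
    then show "y \<in> {y \<in> cylinder k G l. shift k (deg G l) y \<in> cylinder k G mu}"
      using y sp shift_path[OF y N] by (simp add: cylinder_def N_def[symmetric] M_def[symmetric])
  next
    fix y assume "y \<in> {y \<in> cylinder k G l. shift k (deg G l) y \<in> cylinder k G mu}"
    then have y: "y \<in> inf_paths k G" and e1: "y 0 N = l" and e2: "shift k N y 0 M = mu"
      by (auto simp: cylinder_def N_def M_def)
    have sp: "shift k N y 0 M = y N (N + M)"
      using shift_app[OF zM, of N y] by (subst add.commute[of N M]) simp
    have "y 0 (N + M) = cmp G l mu" using path_cmp[OF y zN NR] e1 e2 sp by simp
    then show "y \<in> cylinder k G (cmp G l mu)" using y by (simp add: cylinder_def R)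
  qed
qed

lemma deg_path0: "x \<in> inf_paths k G \<Longrightarrow> q \<in> Nk k \<Longrightarrow> deg G (x 0 q) = q"
  using path_mor[of x 0 q] by (simp add: Om_iff Nk_0 fun_eq_iff)

lemma path0_in: "x \<in> inf_paths k G \<Longrightarrow> q \<in> Nk k \<Longrightarrow> x 0 q \<in> mors G"
  using path_mor[of x 0 q] by (simp add: Om_iff Nk_0)

lemma sing_eq:
  assumes g: "g \<in> inf_paths k G"
  shows "{g} = (\<Inter>n. cylinder k G (g 0 (Dg k n)))"
proof (intro set_eqI iffI)
  fix y assume "y \<in> {g}" then show "y \<in> (\<Inter>n. cylinder k G (g 0 (Dg k n)))"
    using g by (auto simp: cylinder_def deg_path0[OF g Nk_D])
next
  fix y assume "y \<in> (\<Inter>n. cylinder k G (g 0 (Dg k n)))"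
  then have y: "y \<in> inf_paths k G" and e: "\<And>n. y 0 (Dg k n) = g 0 (Dg k n)"
    by (auto simp: cylinder_def deg_path0[OF g Nk_D])
  show "y \<in> {g}" using path_ext[OF y g e] by simp
qed

lemma cyl_decr:
  assumes g: "g \<in> inf_paths k G"
  shows "cylinder k G (g 0 (Dg k (Suc n))) \<subseteq> cylinder k G (g 0 (Dg k n))"
proof
  fix y assume "y \<in> cylinder k G (g 0 (Dg k (Suc n)))"
  then have y: "y \<in> inf_paths k G" and e: "y 0 (Dg k (Suc n)) = g 0 (Dg k (Suc n))"
    by (auto simp: cylinder_def deg_path0[OF g Nk_D])
  have "y 0 (Dg k n) = g 0 (Dg k n)"
    using path_seg[OF y g Nk_0 Nk_D Nk_D _ D_mono] e by (auto intro: le_funI)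
  then show "y \<in> cylinder k G (g 0 (Dg k n))" using y by (simp add: cylinder_def deg_path0[OF g Nk_D])
qed

lemma Bg_eq:
  assumes l: "l \<in> mors G" and g: "g \<in> inf_paths k G" and g0: "g 0 0 = src G l"
  shows "{y \<in> cylinder k G l. shift k (deg G l) y = g} = (\<Inter>n. cylinder k G (cmp G l (g 0 (Dg k n))))"
proof -
  have mu: "g 0 (Dg k n) \<in> mors G" "src G l = rng G (g 0 (Dg k n))" for n
    using path_mor[of g 0 "Dg k n"] g g0 by (auto simp: Om_iff Nk_0 Nk_D)
  have sh: "y \<in> cylinder k G l \<Longrightarrow> shift k (deg G l) y \<in> inf_paths k G" for y
    using shift_path deg_in[OF l] by (auto simp: cylinder_def)
  show ?thesis
    unfolding cyl_comp[OF l mu] using sing_eq[OF g] sh by blast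
qed

lemma shift_src:
  assumes l: "l \<in> mors G" and y: "y \<in> cylinder k G l"
  shows "shift k (deg G l) y \<in> cylinder k G (src G l)"
proof -
  have yp: "y \<in> inf_paths k G" and e: "y 0 (deg G l) = l" using y by (auto simp: cylinder_def)
  have N: "deg G l \<in> Nk k" by (rule deg_in[OF l])
  have "shift k (deg G l) y 0 0 = y (deg G l) (deg G l)"
    using shift_app[of 0 0 "deg G l" y] Nk_0 by (simp add: Om_iff)
  also have "\<dots> = src G l" using path_mor[OF yp path_0N[OF yp N]] e by simp
  finally show ?thesis using shift_path[OF yp N] by (simp add: cylinder_def deg_src[OF l])
qed

section \<open>orbit\<close>

lemma orbit_sub: "orbit k G w \<subseteq> inf_paths k G" by (auto simp: orbit_def)

lemma orbit_self: "w \<in> inf_paths k G \<Longrightarrow> w \<in> orbit k G w"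
  using Nk_0 by (auto simp: orbit_def)

lemma orbit_shift:
  assumes y: "y \<in> inf_paths k G" and N: "N \<in> Nk k"
  shows "shift k N y \<in> orbit k G w \<longleftrightarrow> y \<in> orbit k G w"
proof
  assume "shift k N y \<in> orbit k G w"
  then obtain m l where m: "m \<in> Nk k" and l: "l \<in> Nk k" and e: "shift k m (shift k N y) = shift k l w"
    by (auto simp: orbit_def)
  then have "shift k (m + N) y = shift k l w" by (simp add: shift_shift)
  then show "y \<in> orbit k G w" using y m N l Nk_add by (auto simp: orbit_def)
next
  assume "y \<in> orbit k G w"
  then obtain m l where m: "m \<in> Nk k" and l: "l \<in> Nk k" and e: "shift k m y = shift k l w"
    by (auto simp: orbit_def)
  have "shift k m (shift k N y) = shift k (m + N) y" using shift_shift[OF m] .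
  also have "\<dots> = shift k (N + m) y" by (simp add: add.commute)
  also have "\<dots> = shift k N (shift k m y)" by (rule shift_shift[OF N, symmetric])
  also have "\<dots> = shift k (N + l) w" using e shift_shift[OF N] by simp
  finally have ee: "shift k m (shift k N y) = shift k (N + l) w" .
  have "N + l \<in> Nk k" using N l by (rule Nk_add)
  then show "shift k N y \<in> orbit k G w"
    using shift_path[OF y N] m ee unfolding orbit_def by blast
qed

lemma shift_inj:
  assumes y: "y \<in> inf_paths k G" and y': "y' \<in> inf_paths k G" and m: "m \<in> Nk k"
    and e1: "shift k m y = shift k m y'" and e2: "y 0 m = y' 0 m"
  shows "y = y'"
proof (rule path_ext[OF y y'])
  fix n
  define r where "r = (\<lambda>i. max (Dg k n i) (m i))"
  have r: "r \<in> Nk k" unfolding r_def by (rule Nk_max[OF Nk_D m])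
  have mr: "Omega_mor k m r" and zm: "Omega_mor k 0 m" and zr: "Omega_mor k 0 (r - m)"
    using m r by (auto simp: Om_iff Nk_0 Nk_diff r_def le_fun_def)
  have rm: "r - m + m = r" using mr by (auto simp: Om_iff le_fun_def fun_eq_iff)
  have "y m r = shift k m y 0 (r - m)" using shift_app[OF zr, of m y] rm by simp
  moreover have "y' m r = shift k m y' 0 (r - m)" using shift_app[OF zr, of m y'] rm by simp
  ultimately have "y m r = y' m r" using e1 by simp
  then have "y 0 r = y' 0 r" using path_cmp[OF y zm mr] path_cmp[OF y' zm mr] e2 by simp
  then show "y 0 (Dg k n) = y' 0 (Dg k n)"
    using path_seg[OF y y' Nk_0 Nk_D r, of n] by (auto simp: r_def le_fun_def)
qed

lemma orbit_countable: "countable (orbit k G w)"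
proof -
  define Q where "Q = (\<lambda>(m, l, mu). {y \<in> inf_paths k G. shift k m y = shift k l w \<and> y 0 m = mu})"
  have "orbit k G w \<subseteq> (\<Union>i\<in>Nk k \<times> Nk k \<times> mors G. Q i)"
  proof
    fix y assume "y \<in> orbit k G w"
    then obtain m l where y: "y \<in> inf_paths k G" and m: "m \<in> Nk k" and l: "l \<in> Nk k"
      and e: "shift k m y = shift k l w" by (auto simp: orbit_def)
    have "y 0 m \<in> mors G" by (rule path0_in[OF y m])
    then show "y \<in> (\<Union>i\<in>Nk k \<times> Nk k \<times> mors G. Q i)"
      using y m l e by (auto simp: Q_def intro!: bexI[of _ "(m, l, y 0 m)"])
  qed
  moreover have "countable (\<Union>i\<in>Nk k \<times> Nk k \<times> mors G. Q i)"
  proof (rule countable_UN)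
    show "countable (Nk k \<times> Nk k \<times> mors G)"
      using countable_Nk kg by (auto simp: is_kgraph_def)
    fix i assume i: "i \<in> Nk k \<times> Nk k \<times> mors G"
    obtain m l mu where ii: "i = (m, l, mu)" by (cases i) auto
    have m: "m \<in> Nk k" using i ii by auto
    have sub: "\<forall>a\<in>Q i. \<forall>b\<in>Q i. a = b"
      using shift_inj[OF _ _ m] by (auto simp: Q_def ii)
    show "countable (Q i)"
    proof (cases "Q i = {}")
      case True then show ?thesis by simp
    next
      case False
      then obtain a where "a \<in> Q i" by auto
      then have "Q i \<subseteq> {a}" using sub by auto
      then show ?thesis using countable_subset by blast
    qed
  qed
  ultimately show ?thesis using countable_subset by blast
qed

section \<open>Borel\<close>

lemma sa: "sigma_algebra (inf_paths k G) (borel_paths k G)"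
  unfolding borel_paths_def
  by (rule sigma_algebra_sigma_sets) (auto simp: cylinder_def)

lemma cyl_borel: "l \<in> mors G \<Longrightarrow> cylinder k G l \<in> borel_paths k G"
  unfolding borel_paths_def by (rule sigma_sets.Basic) auto

lemma sing_borel: "g \<in> inf_paths k G \<Longrightarrow> {g} \<in> borel_paths k G"
proof -
  assume g: "g \<in> inf_paths k G"
  interpret sigma_algebra "inf_paths k G" "borel_paths k G" by (rule sa)
  have "(\<Inter>n. cylinder k G (g 0 (Dg k n))) \<in> borel_paths k G"
    using cyl_borel path0_in[OF g Nk_D] by auto
  then show ?thesis using sing_eq[OF g] by simp
qed

end



definition en :: "'p set \<Rightarrow> nat \<Rightarrow> 'p set" where
  "en C n = {g \<in> C. to_nat_on C g = n}"

lemma en_cases: "countable C \<Longrightarrow> en C n = {} \<or> (\<exists>g\<in>C. en C n = {g})"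
proof -
  assume c: "countable C"
  show ?thesis
  proof (cases "\<exists>g\<in>C. to_nat_on C g = n")
    case True
    then obtain g where g: "g \<in> C" "to_nat_on C g = n" by blast
    have "en C n = {g}" using g inj_on_to_nat_on[OF c] unfolding en_def inj_on_def by auto
    then show ?thesis using g by blast
  next
    case False then show ?thesis by (auto simp: en_def)
  qed
qed

lemma en_disj: "disjoint_family (en C)"
  by (auto simp: disjoint_family_on_def en_def)

lemma en_Un: "(\<Union>n. en C n) = C"
  by (auto simp: en_def)

lemma en_sub: "en C n \<subseteq> C"
  by (auto simp: en_def)

lemma en_fin: "countable C \<Longrightarrow> finite (\<Union>n<N. en C n)"
proof -
  assume c: "countable C"
  have "(\<Union>n<N. en C n) \<subseteq> C" by (auto simp: en_def)
  then have "inj_on (to_nat_on C) (\<Union>n<N. en C n)" using inj_on_to_nat_on[OF c] inj_on_subset by blast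
  moreover have "to_nat_on C ` (\<Union>n<N. en C n) \<subseteq> {..<N}" by (auto simp: en_def)
  ultimately show ?thesis using inj_on_finite by blast
qed

locale rp = kg k G for k :: nat and G :: "'a kgraph" +
  fixes t :: "'a \<Rightarrow> 'h::chilbert \<Rightarrow> 'h" and P :: "'a ipath set \<Rightarrow> 'h \<Rightarrow> 'h"
  assumes rep: "is_rep k G t" and rpvm: "rep_pvm k G t P"
begin

sublocale M: pvmc "inf_paths k G" "borel_paths k G" P
proof -
  interpret sigma_algebra "inf_paths k G" "borel_paths k G" by (rule sa)
  show "pvmc (inf_paths k G) (borel_paths k G) P"
    by unfold_locales (use rpvm in \<open>simp add: rep_pvm_def\<close>)
qed

lemma sing: "g \<in> inf_paths k G \<Longrightarrow> {g} \<in> borel_paths k G" by (rule sing_borel)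

lemma cnt_in: "countable C \<Longrightarrow> C \<subseteq> inf_paths k G \<Longrightarrow> C \<in> borel_paths k G"
  using M.countable_in sing by blast

lemma t_bclin: "l \<in> mors G \<Longrightarrow> bclin (t l)" using rep by (simp add: is_rep_def)
lemma t_bl: "l \<in> mors G \<Longrightarrow> bounded_linear (t l)" using t_bclin by (simp add: bclin_def)
lemma A_bl: "l \<in> mors G \<Longrightarrow> bounded_linear (cadj (t l))" using t_bclin cadj_bl by blast

lemma src_vert: "l \<in> mors G \<Longrightarrow> src G l \<in> vertices G"
  by (simp add: vertices_def src_in rng_src)
lemma rng_vert: "l \<in> mors G \<Longrightarrow> rng G l \<in> vertices G"
  by (simp add: vertices_def rng_in rng_rng)

lemma tv_proj: "v \<in> vertices G \<Longrightarrow> is_projection (t v)" using rep by (simp add: is_rep_def)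

lemma t_comp: "l \<in> mors G \<Longrightarrow> m \<in> mors G \<Longrightarrow> src G l = rng G m \<Longrightarrow> t l \<circ> t m = t (cmp G l m)"
  using rep by (simp add: is_rep_def)

lemma ck3: "l \<in> mors G \<Longrightarrow> cadj (t l) \<circ> t l = t (src G l)"
  using rep by (simp add: is_rep_def)

lemma ck3x: "l \<in> mors G \<Longrightarrow> cadj (t l) (t l x) = t (src G l) x"
  using ck3 by (metis comp_apply)

lemma t_src: "l \<in> mors G \<Longrightarrow> t l \<circ> t (src G l) = t l"
  using t_comp[of l "src G l"] by (simp add: src_in rng_src cmp_src)

lemma t_rng: "l \<in> mors G \<Longrightarrow> t (rng G l) \<circ> t l = t l"
  using t_comp[of "rng G l" l] by (simp add: rng_in src_rng cmp_rng)

lemma cadj_proj: "is_projection E \<Longrightarrow> cadj E = E" by (simp add: is_projection_def)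

lemma A_src: "l \<in> mors G \<Longrightarrow> t (src G l) \<circ> cadj (t l) = cadj (t l)"
proof -
  assume l: "l \<in> mors G"
  have "cadj (t l \<circ> t (src G l)) = cadj (t (src G l)) \<circ> cadj (t l)"
    using l by (intro cadj_comp t_bclin src_in)
  then show ?thesis using t_src[OF l] cadj_proj[OF tv_proj[OF src_vert[OF l]]] by simp
qed

lemma A_rng: "l \<in> mors G \<Longrightarrow> cadj (t l) \<circ> t (rng G l) = cadj (t l)"
proof -
  assume l: "l \<in> mors G"
  have "cadj (t (rng G l) \<circ> t l) = cadj (t l) \<circ> cadj (t (rng G l))"
    using l by (intro cadj_comp t_bclin rng_in)
  then show ?thesis using t_rng[OF l] cadj_proj[OF tv_proj[OF rng_vert[OF l]]] by simp
qed

lemma Pcyl: "l \<in> mors G \<Longrightarrow> P (cylinder k G l) = t l \<circ> cadj (t l)"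
  using rpvm by (simp add: rep_pvm_def)

lemma key_cyl:
  assumes l: "l \<in> mors G" and mu: "mu \<in> mors G" and lm: "src G l = rng G mu"
  shows "cadj (t l) (P (cylinder k G (cmp G l mu)) (t l x)) = P (cylinder k G mu) x"
proof -
  have c: "cmp G l mu \<in> mors G" by (rule cmp_in[OF l mu lm])
  have tc: "t (cmp G l mu) = t l \<circ> t mu" using t_comp[OF l mu lm] by simp
  have ac: "cadj (t l \<circ> t mu) = cadj (t mu) \<circ> cadj (t l)"
    using l mu by (intro cadj_comp t_bclin)
  have "cadj (t l) (P (cylinder k G (cmp G l mu)) (t l x))
      = (cadj (t l) \<circ> t l) (t mu (cadj (t mu) ((cadj (t l) \<circ> t l) x)))"
    by (simp add: Pcyl[OF c] tc ac)
  also have "\<dots> = t (rng G mu) (t mu (cadj (t mu) (t (rng G mu) x)))"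
    by (simp add: ck3[OF l] lm)
  also have "\<dots> = t mu (cadj (t mu) x)"
    using t_rng[OF mu] A_rng[OF mu] by (metis comp_apply)
  also have "\<dots> = P (cylinder k G mu) x" by (simp add: Pcyl[OF mu])
  finally show ?thesis .
qed

lemma key_sing:
  assumes l: "l \<in> mors G" and g: "g \<in> inf_paths k G" and g0: "g 0 0 = src G l"
  shows "cadj (t l) (P {y \<in> cylinder k G l. shift k (deg G l) y = g} (t l x)) = P {g} x"
proof -
  define C where "C n = cylinder k G (cmp G l (g 0 (Dg k n)))" for n
  have mu: "g 0 (Dg k n) \<in> mors G" "src G l = rng G (g 0 (Dg k n))" for n
    using path_mor[of g 0 "Dg k n"] g g0 by (auto simp: Om_iff Nk_0 Nk_D)
  have Cs: "range C \<subseteq> borel_paths k G"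
    using cyl_borel cmp_in[OF l mu(1) mu(2)] by (auto simp: C_def)
  have Cd: "C (Suc n) \<subseteq> C n" for n
    unfolding C_def cyl_comp[OF l mu] using cyl_decr[OF g, of n] by blast
  have B: "{y \<in> cylinder k G l. shift k (deg G l) y = g} = (\<Inter>n. C n)"
    unfolding C_def by (rule Bg_eq[OF l g g0])
  have L1: "(\<lambda>n. P (C n) (t l x)) \<longlonglongrightarrow> P (\<Inter>n. C n) (t l x)"
    by (rule M.decr[OF Cs Cd])
  have L2: "(\<lambda>n. cadj (t l) (P (C n) (t l x))) \<longlonglongrightarrow> cadj (t l) (P (\<Inter>n. C n) (t l x))"
    by (rule bounded_linear.tendsto[OF A_bl[OF l] L1])
  define D where "D n = cylinder k G (g 0 (Dg k n))" for n
  have Ds: "range D \<subseteq> borel_paths k G"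
    using cyl_borel mu(1) by (auto simp: D_def)
  have Dd: "D (Suc n) \<subseteq> D n" for n unfolding D_def by (rule cyl_decr[OF g])
  have L3: "(\<lambda>n. P (D n) x) \<longlonglongrightarrow> P (\<Inter>n. D n) x"
    by (rule M.decr[OF Ds Dd])
  have eq: "cadj (t l) (P (C n) (t l x)) = P (D n) x" for n
    unfolding C_def D_def by (rule key_cyl[OF l mu])
  have "(\<Inter>n. D n) = {g}" unfolding D_def using sing_eq[OF g] by simp
  then have L4: "(\<lambda>n. cadj (t l) (P (C n) (t l x))) \<longlonglongrightarrow> P {g} x" using L3 eq by simp
  show ?thesis using LIMSEQ_unique[OF L2 L4] B by simp
qed

end



context rp
begin

lemma orbit_borel: "orbit k G w \<in> borel_paths k G"
  by (rule cnt_in[OF orbit_countable orbit_sub])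

lemma en_S: "countable C \<Longrightarrow> C \<subseteq> inf_paths k G \<Longrightarrow> en C n \<in> borel_paths k G"
  using cnt_in[of "en C n"] en_sub[of C n] countable_subset by blast

lemma key_orbit:
  assumes l: "l \<in> mors G"
  shows "cadj (t l) (P (orbit k G w \<inter> cylinder k G l) (t l x)) = P (orbit k G w \<inter> cylinder k G (src G l)) x"
proof -
  define Ob where "Ob = orbit k G w"
  define C where "C = Ob \<inter> cylinder k G (src G l)"
  define N where "N = deg G l"
  have N: "N \<in> Nk k" using deg_in[OF l] by (simp add: N_def)
  have cC: "countable C" unfolding C_def Ob_def using orbit_countable countable_subset by blast
  have CX: "C \<subseteq> inf_paths k G" unfolding C_def Ob_def using orbit_sub by blast
  define A where "A = en C"
  define B where "B n = {y \<in> cylinder k G l. shift k N y \<in> A n}" for n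
  have As: "range A \<subseteq> borel_paths k G" using en_S[OF cC CX] by (auto simp: A_def)
  have Ad: "disjoint_family A" unfolding A_def by (rule en_disj)
  have AU: "(\<Union>n. A n) = C" unfolding A_def by (rule en_Un)
  have Bd: "disjoint_family B" using Ad unfolding B_def disjoint_family_on_def by blast
  have BU: "(\<Union>n. B n) = Ob \<inter> cylinder k G l"
  proof (intro set_eqI iffI)
    fix y assume "y \<in> (\<Union>n. B n)"
    then have y: "y \<in> cylinder k G l" and sy: "shift k N y \<in> C" using AU unfolding B_def by blast+
    have yp: "y \<in> inf_paths k G" using y cyl_sub by blast
    have "shift k N y \<in> Ob" using sy by (simp add: C_def)
    then have "y \<in> Ob" using orbit_shift[OF yp N] by (simp add: Ob_def)
    then show "y \<in> Ob \<inter> cylinder k G l" using y by simp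
  next
    fix y assume y: "y \<in> Ob \<inter> cylinder k G l"
    then have yp: "y \<in> inf_paths k G" using cyl_sub by blast
    have "shift k N y \<in> Ob" using orbit_shift[OF yp N] y by (simp add: Ob_def)
    moreover have "shift k N y \<in> cylinder k G (src G l)" using shift_src[OF l] y by (simp add: N_def)
    ultimately have "shift k N y \<in> C" by (simp add: C_def)
    then show "y \<in> (\<Union>n. B n)" using AU unfolding B_def using y by blast
  qed
  have per: "B n \<in> borel_paths k G \<and> cadj (t l) (P (B n) (t l x)) = P (A n) x" for n
  proof (cases "A n = {}")
    case True
    then have "B n = {}" by (simp add: B_def)
    then show ?thesis using True linear_0[OF bounded_linear.linear[OF A_bl[OF l]]] by simp
  next
    case False
    then obtain g where g: "g \<in> C" and An: "A n = {g}" using en_cases[OF cC, of n] by (auto simp: A_def)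
    have gp: "g \<in> inf_paths k G" using g CX by blast
    have "g 0 (deg G (src G l)) = src G l" using g by (simp add: C_def cylinder_def)
    then have g0: "g 0 0 = src G l" by (simp add: deg_src[OF l])
    have Bn: "B n = {y \<in> cylinder k G l. shift k (deg G l) y = g}" by (simp add: B_def An N_def)
    have "B n \<in> borel_paths k G"
    proof -
      interpret sigma_algebra "inf_paths k G" "borel_paths k G" by (rule sa)
      have mu: "cmp G l (g 0 (Dg k m)) \<in> mors G" for m
        using path_mor[of g 0 "Dg k m"] gp g0 cmp_in[OF l] by (auto simp: Om_iff Nk_0 Nk_D)
      have I: "(\<Inter>m. cylinder k G (cmp G l (g 0 (Dg k m)))) \<in> borel_paths k G"
        using cyl_borel[OF mu] by auto
      show ?thesis unfolding Bn Bg_eq[OF l gp g0] by (rule I)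
    qed
    then show ?thesis using key_sing[OF l gp g0, of x] Bn An by simp
  qed
  have Bs: "range B \<subseteq> borel_paths k G" using per by auto
  have s1: "(\<lambda>n. P (B n) (t l x)) sums P (Ob \<inter> cylinder k G l) (t l x)"
    using M.csum[OF Bs Bd, of "t l x"] BU by simp
  have s2: "(\<lambda>n. cadj (t l) (P (B n) (t l x))) sums cadj (t l) (P (Ob \<inter> cylinder k G l) (t l x))"
    by (rule bounded_linear.sums[OF A_bl[OF l] s1])
  have s3: "(\<lambda>n. P (A n) x) sums P C x"
    using M.csum[OF As Ad, of x] AU by simp
  have "(\<lambda>n. cadj (t l) (P (B n) (t l x))) = (\<lambda>n. P (A n) x)" using per by simp
  then show ?thesis using s2 s3 sums_unique2 unfolding Ob_def C_def by metis
qed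

end



context rp
begin

lemma main:
  assumes irr: "irreducible_rep G t" and w: "\<omega> \<in> inf_paths k G" and atom: "P {\<omega>} \<noteq> 0"
  shows "purely_atomic k G P \<and> supported_on k G P (orbit k G \<omega>)"
proof -
  define X where "X = inf_paths k G"
  define S where "S = borel_paths k G"
  define Ob where "Ob = orbit k G \<omega>"
  have ObS: "Ob \<in> S" unfolding Ob_def S_def by (rule orbit_borel)
  have ObX: "Ob \<subseteq> X" unfolding Ob_def X_def by (rule orbit_sub)
  have cOb: "countable Ob" unfolding Ob_def by (rule orbit_countable)
  have XS: "X \<in> S" unfolding X_def S_def by (rule M.top)
  have lin: "linear (P A)" if "A \<in> S" for A using M.bl[of A] that by (simp add: S_def bounded_linear.linear)
  have inter: "P (A \<inter> B) x = P A (P B x)" if "A \<in> S" "B \<in> S" for A B x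
    using M.inter that by (simp add: S_def)
  define Msp where "Msp = {x. P Ob x = x}"
  have cl: "closed_csubspace Msp"
    unfolding closed_csubspace_def
  proof (intro conjI ballI allI)
    show "0 \<in> Msp" using linear_0[OF lin[OF ObS]] by (simp add: Msp_def)
    fix x y assume "x \<in> Msp" "y \<in> Msp"
    then show "x + y \<in> Msp" using linear_add[OF lin[OF ObS]] by (simp add: Msp_def)
  next
    fix c x assume "x \<in> Msp"
    then show "scaleC c x \<in> Msp" using M.proj[of Ob] ObS
      by (simp add: Msp_def S_def is_projection_def bclin_def)
  next
    have "continuous_on UNIV (P Ob)" using M.bl[of Ob] ObS by (simp add: S_def linear_continuous_on)
    then show "closed Msp" unfolding Msp_def by (intro closed_Collect_eq continuous_on_id)
  qed
  have inv: "t l ` Msp \<subseteq> Msp \<and> cadj (t l) ` Msp \<subseteq> Msp" if l: "l \<in> mors G" for l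
  proof -
    define Z where "Z = cylinder k G l"
    define Zs where "Zs = cylinder k G (src G l)"
    have ZS: "Z \<in> S" "Zs \<in> S" using cyl_borel l src_in by (auto simp: Z_def Zs_def S_def)
    have OZ: "Ob \<inter> Z \<in> S" "Ob \<inter> Zs \<in> S" using ZS ObS by (auto simp: S_def)
    have linA: "linear (cadj (t l))" using A_bl[OF l] by (simp add: bounded_linear.linear)
    have lint: "linear (t l)" using t_bl[OF l] by (simp add: bounded_linear.linear)
    have PZ: "P Z z = t l (cadj (t l) z)" for z using Pcyl[OF l] by (simp add: Z_def)
    have PZs: "P Zs z = t (src G l) z" for z
    proof -
      have "P Zs z = t (src G l) (cadj (t (src G l)) z)" using Pcyl[OF src_in[OF l]] by (simp add: Zs_def)
      also have "\<dots> = t (src G l) z"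
        using cadj_proj[OF tv_proj[OF src_vert[OF l]]] proj_idem[OF tv_proj[OF src_vert[OF l]]] by simp
      finally show ?thesis .
    qed
    have KO: "cadj (t l) (P (Ob \<inter> Z) (t l z)) = P (Ob \<inter> Zs) z" for z
      using key_orbit[OF l] by (simp add: Ob_def Z_def Zs_def)
    have a: "P Ob (t l x) = t l x" if x: "P Ob x = x" for x
    proof -
      define y where "y = t l x"
      define Q where "Q = P (Ob \<inter> Z) y"
      have "P (Ob \<inter> Zs) x = P Zs x"
        using inter[OF ObS ZS(2)] M.comm[of Ob Zs] ObS ZS x by (simp add: S_def)
      then have h1: "cadj (t l) Q = t (src G l) x" using KO[of x] PZs by (simp add: Q_def y_def)
      have h4: "cadj (t l) y = t (src G l) x" by (simp add: y_def ck3x[OF l])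
      have h5: "cadj (t l) (Q - y) = 0" using h1 h4 linear_diff[OF linA] by simp
      have h6: "P Z Q = Q" using inter[OF ZS(1) OZ(1), of y, symmetric]
        by (simp add: Q_def Int_absorb1 Int_commute Int_left_commute)
      have h7: "P Z y = y"
        using PZ[of y] ck3x[OF l] t_src[OF l] by (simp add: y_def) (metis comp_apply)
      have "P Z (Q - y) = Q - y" using h6 h7 linear_diff[OF lin[OF ZS(1)]] by simp
      moreover have "P Z (Q - y) = 0" using PZ h5 linear_0[OF lint] by simp
      ultimately have "Q = y" by simp
      then have "P Ob y = P Ob Q" by simp
      also have "\<dots> = Q" using inter[OF ObS OZ(1), of y, symmetric] by (simp add: Q_def Int_assoc[symmetric])
      finally show ?thesis using \<open>Q = y\<close> by (simp add: y_def)
    qed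
    have b: "P Ob (cadj (t l) x) = cadj (t l) x" if x: "P Ob x = x" for x
    proof -
      define y where "y = cadj (t l) x"
      have ty: "t l y = P Z x" by (simp add: y_def PZ)
      have "P (Ob \<inter> Z) (P Z x) = P (Ob \<inter> Z) x"
        using inter[OF OZ(1) ZS(1), of x, symmetric] by (simp add: Int_assoc)
      also have "\<dots> = P Z x"
        using inter[OF ZS(1) ObS, of x] x by (simp add: Int_commute)
      finally have "P (Ob \<inter> Z) (t l y) = P Z x" using ty by simp
      then have "P (Ob \<inter> Zs) y = cadj (t l) (P Z x)" using KO[of y] by simp
      also have "\<dots> = t (src G l) (cadj (t l) x)" using PZ ck3x[OF l] by simp
      also have "\<dots> = y" using A_src[OF l] by (simp add: y_def) (metis comp_apply)
      finally have yy: "P (Ob \<inter> Zs) y = y" .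
      have "P Ob y = P Ob (P (Ob \<inter> Zs) y)" using yy by simp
      also have "\<dots> = P (Ob \<inter> Zs) y" using inter[OF ObS OZ(2), of y, symmetric] by (simp add: Int_assoc[symmetric])
      finally show ?thesis using yy by (simp add: y_def)
    qed
    show ?thesis using a b by (auto simp: Msp_def)
  qed
  have MU: "Msp = {0} \<or> Msp = UNIV" using irr cl inv by (simp add: irreducible_rep_def)
  obtain z where z: "P {\<omega>} z \<noteq> 0" using atom by (auto simp: fun_eq_iff)
  have wO: "\<omega> \<in> Ob" unfolding Ob_def by (rule orbit_self[OF w])
  have wS: "{\<omega>} \<in> S" using sing[OF w] by (simp add: S_def)
  have "P Ob (P {\<omega>} z) = P {\<omega>} z" using inter[OF ObS wS, of z, symmetric] wO by (simp add: Int_absorb1)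
  then have "P {\<omega>} z \<in> Msp" by (simp add: Msp_def)
  then have "Msp = UNIV" using MU z by auto
  then have id: "P Ob x = x" for x by (auto simp: Msp_def)
  have PA: "P A x = P (A \<inter> Ob) x" if "A \<in> S" for A x using inter[OF that ObS] id by simp
  have XOS: "X - Ob \<in> S" using XS ObS by (simp add: S_def M.Diff)
  have supp: "supported_on k G P Ob"
    unfolding supported_on_def
  proof
    fix x
    have "(X - Ob) \<inter> Ob = {}" by blast
    then show "P (inf_paths k G - Ob) x = 0 x" using PA[OF XOS, of x] by (simp add: X_def)
  qed
  define W where "W = {g \<in> Ob. P {g} \<noteq> 0}"
  have WO: "W \<subseteq> Ob" by (auto simp: W_def)
  have cW: "countable W" using cOb WO countable_subset by blast
  have WX: "W \<subseteq> X" using WO ObX by blast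
  have WS: "W \<in> S" using cnt_in[OF cW] WX by (simp add: S_def X_def)
  have singS: "\<And>g. g \<in> X \<Longrightarrow> {g} \<in> S" using sing by (simp add: S_def X_def)
  have XW0: "P (X - W) = 0"
  proof
    fix x
    define C where "C = Ob - W"
    have cC: "countable C" using cOb countable_subset by (auto simp: C_def)
    have CX: "C \<subseteq> X" using ObX by (auto simp: C_def)
    have XWS: "X - W \<in> S" using XS WS by (simp add: S_def M.Diff)
    have "(X - W) \<inter> Ob = C" using ObX by (auto simp: C_def)
    then have "P (X - W) x = P C x" using PA[OF XWS, of x] by simp
    moreover have "(\<lambda>n. P (en C n) x) sums P C x"
    proof -
      have "range (en C) \<subseteq> borel_paths k G" using en_S[OF cC] CX by (auto simp: X_def)
      from M.csum[OF this en_disj, of x] show ?thesis by (simp only: en_Un)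
    qed
    moreover have "P (en C n) x = 0" for n
    proof -
      from en_cases[OF cC, of n] show ?thesis
      proof
        assume "en C n = {}" then show ?thesis by simp
      next
        assume "\<exists>g\<in>C. en C n = {g}"
        then obtain g where "g \<in> C" "en C n = {g}" by blast
        then show ?thesis by (simp add: C_def W_def)
      qed
    qed
    ultimately have "(\<lambda>n. 0::'h) sums P C x" "P (X - W) x = P C x" by simp_all
    then have "P C x = 0" "P (X - W) x = P C x" using sums_zero sums_unique2 by blast+
    then show "P (X - W) x = 0 x" by simp
  qed
  have PW: "P W x = x" for x
  proof -
    have "P X x = x" using PA[OF XS, of x] ObX id by (simp add: Int_absorb1)
    moreover have "P ((X - W) \<union> W) x = P (X - W) x + P W x"
      using XS WS by (intro M.un2) (auto simp: S_def M.Diff)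
    moreover have "(X - W) \<union> W = X" using WX by auto
    ultimately show ?thesis using XW0 by simp
  qed
  have hs: "((\<lambda>g. P {g} x) has_sum x) W" for x
  proof -
    define e where "e = en W"
    define F where "F N = (\<Union>n<N. e n)" for N
    have es: "range e \<subseteq> S" using en_S[OF cW] WX by (auto simp: e_def S_def X_def)
    have ed: "disjoint_family e" by (simp add: e_def en_disj)
    have "(\<lambda>n. P (e n) x) sums P W x" using M.csum[of e x] es ed en_Un[of W]
      by (simp add: S_def e_def)
    then have "(\<lambda>N. \<Sum>n<N. P (e n) x) \<longlonglongrightarrow> x" using PW by (simp add: sums_def)
    moreover have "(\<Sum>n<N. P (e n) x) = P (F N) x" for N
      using M.fin_un[of e N x] es ed by (simp add: F_def S_def)
    ultimately have L: "(\<lambda>N. P (F N) x) \<longlonglongrightarrow> x" by simp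
    have Ffin: "finite (F N)" for N unfolding F_def e_def by (rule en_fin[OF cW])
    have FW: "F N \<subseteq> W" for N using en_sub[of W] unfolding F_def e_def by blast
    have finS: "finite Y \<Longrightarrow> Y \<subseteq> W \<Longrightarrow> Y \<in> S" for Y
      using cnt_in[of Y] countable_finite WX by (auto simp: S_def X_def)
    have split: "P W x = P Y x + P (W - Y) x" if "finite Y" "Y \<subseteq> W" for Y
    proof -
      have "P (Y \<union> (W - Y)) x = P Y x + P (W - Y) x"
        using finS[OF that] WS by (intro M.un2) (auto simp: S_def M.Diff)
      moreover have "Y \<union> (W - Y) = W" using that by auto
      ultimately show ?thesis by simp
    qed
    show ?thesis
      unfolding has_sum_def
    proof (rule tendstoI)
      fix eps :: real assume eps: "eps > 0"
      from L[unfolded LIMSEQ_iff] eps obtain no where "\<forall>n\<ge>no. norm (P (F n) x - x) < eps" by blast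
      then have N: "dist (P (F no) x) x < eps" by (simp add: dist_norm)
      define N where "N = no"
      from N have N: "dist (P (F N) x) x < eps" by (simp add: N_def)
      show "\<forall>\<^sub>F Y in finite_subsets_at_top W. dist (sum (\<lambda>g. P {g} x) Y) x < eps"
        unfolding eventually_finite_subsets_at_top
      proof (intro exI conjI allI impI)
        show "finite (F N)" "F N \<subseteq> W" by (rule Ffin, rule FW)
        fix Y assume Y: "finite Y \<and> F N \<subseteq> Y \<and> Y \<subseteq> W"
        have YX: "Y \<subseteq> X" using Y WX by blast
        have "sum (\<lambda>g. P {g} x) Y = P Y x"
          using M.fin_sum[of Y x] Y YX singS by (simp add: S_def X_def)
        moreover have "x - P Y x = P (W - Y) x" using split[of Y] Y PW[of x] by (metis add_diff_cancel_left')
        moreover have "x - P (F N) x = P (W - F N) x" using split[of "F N"] Ffin FW PW[of x] by (metis add_diff_cancel_left')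
        moreover have "P (W - Y) x = P (W - Y) (P (W - F N) x)"
        proof -
          have "W - Y \<in> S" "W - F N \<in> S" using WS finS[of Y] finS[OF Ffin FW] Y
            by (auto simp: S_def M.Diff)
          moreover have "(W - Y) \<inter> (W - F N) = W - Y" using Y by auto
          ultimately show ?thesis using inter[of "W - Y" "W - F N" x] by simp
        qed
        moreover have "norm (P (W - Y) (P (W - F N) x)) \<le> norm (P (W - F N) x)"
        proof -
          have "W - Y \<in> S" using WS finS[of Y] Y by (auto simp: S_def M.Diff)
          then have "is_projection (P (W - Y))" using M.proj by (simp add: S_def)
          then show ?thesis by (rule proj_norm)
        qed
        ultimately have "dist (sum (\<lambda>g. P {g} x) Y) x \<le> dist (P (F N) x) x"
          by (simp add: dist_norm norm_minus_commute)
        then show "dist (sum (\<lambda>g. P {g} x) Y) x < eps" using N by simp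
      qed
    qed
  qed
  have pa: "purely_atomic k G P"
    unfolding purely_atomic_def
  proof (intro bexI conjI)
    show "P (inf_paths k G - W) = 0" using XW0 by (simp add: X_def)
    show "\<forall>g\<in>W. P {g} \<noteq> 0" by (simp add: W_def)
    show "\<forall>x. ((\<lambda>g. P {g} x) has_sum x) W" using hs by blast
    show "W \<in> borel_paths k G" using WS by (simp add: S_def)
  qed
  show ?thesis using pa supp by (simp add: Ob_def)
qed

end


theorem proposition3p8:
  fixes k :: nat and G :: "'a kgraph" and t :: "'a \<Rightarrow> 'h::chilbert \<Rightarrow> 'h"
    and P :: "'a ipath set \<Rightarrow> 'h \<Rightarrow> 'h" and \<omega> :: "'a ipath"
  assumes "is_kgraph k G" and "row_finite k G" and "no_sources k G"
    and "is_rep k G t" and "irreducible_rep G t"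
    and "rep_pvm k G t P"
    and "\<omega> \<in> inf_paths k G" and "P {\<omega>} \<noteq> 0"
  shows "purely_atomic k G P \<and> supported_on k G P (orbit k G \<omega>)"
proof -
  interpret rp k G t P
    by (unfold_locales) (use assms in auto)
  show ?thesis by (rule main) (use assms in auto)
qed

end
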